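(* Let $a,b,x\in M_d(\mathbb{C})$ be three matrices, where $b$ is Hermitian and positive definite, and suppose $bx+xb=a$. Then \[\|x\|\le\sqrt{\tfrac d2}\,\|b^{-1}\|\,\|a\|,\] where $\|\cdot\|$ denotes the Frobenius norm $\|x\|=\sqrt{\operatorname{tr}(xx^* )}$. *)

theory Defs
  imports "HOL-Analysis.Analysis"
begin

text \<open>Complex d x d matrices are rendered as complex^'n^'n, with d = CARD('n).\<close>

definition cadjoint :: "complex^'n^'m \<Rightarrow> complex^'m^'n" where
  "cadjoint A = (\<chi> i j. cnj (A $ j $ i))"

definition hermitian :: "complex^'n^'n \<Rightarrow> bool" where
  "hermitian A \<longleftrightarrow> cadjoint A = A"

definition pos_def :: "complex^'n^'n \<Rightarrow> bool" where
  "pos_def A \<longleftrightarrow> (\<forall>v::complex^'n. v \<noteq> 0 \<longrightarrow>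
      (\<Sum>i\<in>UNIV. cnj (v $ i) * (A *v v) $ i) \<in> \<real> \<and>
      Re (\<Sum>i\<in>UNIV. cnj (v $ i) * (A *v v) $ i) > 0)"

text \<open>Frobenius norm sqrt(tr(x x*)); tr(x x*) is real and nonnegative.\<close>
definition frob_norm :: "complex^'n^'n \<Rightarrow> real" where
  "frob_norm x = sqrt (Re (trace (x ** cadjoint x)))"

end

theory Submission
  imports Defs
begin

lemma inner_cvec: "inner (u::complex^'n) w = Re (\<Sum>i\<in>UNIV. cnj (u$i) * w$i)"
  by (simp add: inner_vec_def inner_complex_def Re_sum)

lemma inner_cmat: "inner (A::complex^'n^'m) B = Re (\<Sum>i\<in>UNIV. \<Sum>k\<in>UNIV. cnj (A$i$k) * B$i$k)"
  by (simp add: inner_vec_def inner_complex_def Re_sum)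

lemma herm_entry: "hermitian b \<Longrightarrow> cnj (b$j$i) = b$i$j"
  unfolding hermitian_def cadjoint_def by (metis vec_lambda_beta)

lemma herm_sym:
  fixes b :: "complex^'n^'n"
  assumes "hermitian b"
  shows "inner u (b *v w) = inner (b *v u) w"
proof -
  have "(\<Sum>i\<in>UNIV. cnj (u$i) * (b *v w)$i) = (\<Sum>j\<in>UNIV. cnj ((b *v u)$j) * w$j)"
  proof -
    have "(\<Sum>i\<in>UNIV. cnj (u$i) * (b *v w)$i) = (\<Sum>i\<in>UNIV. \<Sum>j\<in>UNIV. cnj (u$i) * b$i$j * w$j)"
      unfolding matrix_vector_mult_def by (simp add: sum_distrib_left mult.assoc)
    also have "\<dots> = (\<Sum>j\<in>UNIV. \<Sum>i\<in>UNIV. cnj (u$i) * b$i$j * w$j)"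
      by (rule sum.swap)
    also have "\<dots> = (\<Sum>j\<in>UNIV. cnj ((b *v u)$j) * w$j)"
      unfolding matrix_vector_mult_def
      by (simp add: sum_distrib_right sum_distrib_left herm_entry[OF assms] mult_ac)
    finally show ?thesis .
  qed
  then show ?thesis by (simp add: inner_cvec)
qed

lemma mv_scaleR: "(b::complex^'n^'m) *v (t *\<^sub>R w) = t *\<^sub>R (b *v w)"
  by (simp add: vec_eq_iff matrix_vector_mult_def scaleR_sum_right)

lemma posdef_nonneg:
  assumes "pos_def b" shows "0 \<le> inner v (b *v v)"
proof (cases "v = 0")
  case True then show ?thesis by simp
next
  case False then show ?thesis using assms unfolding pos_def_def inner_cvec
    by (meson less_imp_le)
qed

lemma posdef_pos:
  assumes "pos_def b" "v \<noteq> 0" shows "0 < inner v (b *v v)"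
  using assms unfolding pos_def_def inner_cvec by blast

lemma frob_eq: "frob_norm x = norm x"
proof -
  have "trace (x ** cadjoint x) = (\<Sum>i\<in>UNIV. \<Sum>k\<in>UNIV. cnj (x$i$k) * x$i$k)"
    by (simp add: trace_def matrix_matrix_mult_def cadjoint_def mult.commute)
  then have "Re (trace (x ** cadjoint x)) = inner x x" by (simp add: inner_cmat)
  then show ?thesis by (simp add: frob_norm_def norm_eq_sqrt_inner)
qed


lemma bf_CS:
  fixes b :: "complex^'n^'n"
  assumes h: "hermitian b" and p: "pos_def b"
  shows "(inner u (b *v w))^2 \<le> inner u (b *v u) * inner w (b *v w)"
proof (cases "w = 0")
  case True then show ?thesis by simp
next
  case False
  define A where "A = inner u (b *v u)"
  define B where "B = inner u (b *v w)"
  define C where "C = inner w (b *v w)"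
  have C: "C > 0" using posdef_pos[OF p False] by (simp add: C_def)
  have sym: "inner w (b *v u) = B" unfolding B_def
    by (metis herm_sym[OF h] inner_commute)
  define t where "t = - B / C"
  have "0 \<le> inner (u + t *\<^sub>R w) (b *v (u + t *\<^sub>R w))" by (rule posdef_nonneg[OF p])
  also have "\<dots> = A + 2 * t * B + t^2 * C"
  proof -
    have "inner (u + t *\<^sub>R w) (b *v (u + t *\<^sub>R w)) = A + t * inner w (b *v u) + t * B + t * t * C"
      unfolding A_def B_def C_def
      by (simp add: matrix_vector_right_distrib mv_scaleR inner_add_left inner_add_right distrib_left)
    then show ?thesis by (simp add: sym power2_eq_square)
  qed
  also have "\<dots> = A - B^2 / C" using C by (simp add: t_def field_simps power2_eq_square)
  finally have "B^2 / C \<le> A" by simp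
  then have "B^2 \<le> A * C" using C by (simp add: divide_le_eq)
  then show ?thesis by (simp add: A_def B_def C_def)
qed

lemma posdef_inv:
  fixes b :: "complex^'n^'n"
  assumes p: "pos_def b"
  shows "b ** matrix_inv b = mat 1"
proof -
  have "\<forall>x. b *v x = 0 \<longrightarrow> x = 0"
    using posdef_pos[OF p] by (metis inner_zero_right less_irrefl)
  then have "\<exists>B. B ** b = mat 1" using matrix_left_invertible_ker by blast
  then have "invertible b" using invertible_left_inverse by blast
  then show ?thesis unfolding invertible_def matrix_inv_def by (metis (mono_tags, lifting) someI_ex)
qed

lemma mv_norm:
  fixes M :: "complex^'n^'m"
  shows "norm (M *v y) \<le> norm M * norm y"
proof -
  have row: "cmod ((M *v y)$i) \<le> norm (M$i) * norm y" for i
  proof -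
    have "cmod ((M *v y)$i) \<le> (\<Sum>j\<in>UNIV. cmod (M$i$j) * cmod (y$j))"
      unfolding matrix_vector_mult_def
      by (simp add: norm_mult[symmetric] norm_sum)
    also have "\<dots> = (\<Sum>j\<in>UNIV. \<bar>cmod (M$i$j)\<bar> * \<bar>cmod (y$j)\<bar>)" by simp
    also have "\<dots> \<le> L2_set (\<lambda>j. cmod (M$i$j)) UNIV * L2_set (\<lambda>j. cmod (y$j)) UNIV"
      by (rule L2_set_mult_ineq)
    also have "\<dots> = norm (M$i) * norm y" by (simp add: norm_vec_def)
    finally show ?thesis .
  qed
  have "norm (M *v y) = L2_set (\<lambda>i. cmod ((M *v y)$i)) UNIV" by (simp add: norm_vec_def)
  also have "\<dots> \<le> L2_set (\<lambda>i. norm (M$i) * norm y) UNIV"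
    by (rule L2_set_mono) (auto simp: row)
  also have "\<dots> = norm M * norm y"
    by (simp add: norm_vec_def L2_set_left_distrib)
  finally show ?thesis .
qed


lemma key_ineq:
  fixes b :: "complex^'n^'n"
  assumes h: "hermitian b" and p: "pos_def b"
  shows "(norm y)^2 \<le> norm (matrix_inv b) * inner y (b *v y)"
proof (cases "y = 0")
  case True then show ?thesis by simp
next
  case False
  define F where "F = norm (matrix_inv b)"
  define z where "z = matrix_inv b *v y"
  have bz: "b *v z = y" unfolding z_def
    by (simp add: matrix_vector_mul_assoc posdef_inv[OF p])
  define be where "be = inner y (b *v y)"
  have be0: "0 \<le> be" unfolding be_def by (rule posdef_nonneg[OF p])
  have "((norm y)^2)^2 = (inner y (b *v z))^2" by (simp add: bz power2_norm_eq_inner)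
  also have "\<dots> \<le> be * inner z (b *v z)" unfolding be_def by (rule bf_CS[OF h p])
  also have "inner z (b *v z) \<le> norm z * norm y" using bz norm_cauchy_schwarz by metis
  then have "be * inner z (b *v z) \<le> be * (norm z * norm y)" using be0 by (rule mult_left_mono)
  also have "norm z \<le> F * norm y" unfolding z_def F_def by (rule mv_norm)
  then have "be * (norm z * norm y) \<le> be * (F * norm y * norm y)"
    using be0 by (simp add: mult_left_mono mult_right_mono)
  finally have A: "((norm y)^2)^2 \<le> be * (F * norm y * norm y)" .
  define q where "q = (norm y)^2"
  have "q * q \<le> (be * F) * q" using A unfolding q_def by (simp add: power2_eq_square mult_ac)
  moreover have "q > 0" using False by (simp add: q_def)
  ultimately have "q \<le> be * F" by (simp add: mult_le_cancel_right_pos)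
  then have "(norm y)^2 \<le> be * F" by (simp add: q_def)
  then show ?thesis by (simp add: be_def F_def mult.commute)
qed

lemma bx_cols:
  fixes b x :: "complex^'n^'n"
  shows "inner (b ** x) x = (\<Sum>k\<in>UNIV. inner (b *v column k x) (column k x))"
proof -
  have e: "(b *v column k x)$i = (b ** x)$i$k" for i k
    by (simp add: matrix_vector_mult_def matrix_matrix_mult_def column_def)
  have "inner (b ** x) x = Re (\<Sum>i\<in>UNIV. \<Sum>k\<in>UNIV. cnj ((b**x)$i$k) * x$i$k)" by (rule inner_cmat)
  also have "\<dots> = Re (\<Sum>k\<in>UNIV. \<Sum>i\<in>UNIV. cnj ((b**x)$i$k) * x$i$k)" by (subst sum.swap) (rule refl)
  also have "\<dots> = (\<Sum>k\<in>UNIV. inner (b *v column k x) (column k x))"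
  proof -
    have c: "(column k x)$i = x$i$k" for i k by (simp add: column_def)
    show ?thesis by (simp only: inner_cvec e c Re_sum)
  qed
  finally show ?thesis .
qed

lemma norm_cols:
  fixes x :: "complex^'n^'n"
  shows "(norm x)^2 = (\<Sum>k\<in>UNIV. (norm (column k x))^2)"
proof -
  have "(norm x)^2 = Re (\<Sum>i\<in>UNIV. \<Sum>k\<in>UNIV. cnj (x$i$k) * x$i$k)" by (simp add: power2_norm_eq_inner inner_cmat)
  also have "\<dots> = Re (\<Sum>k\<in>UNIV. \<Sum>i\<in>UNIV. cnj (x$i$k) * x$i$k)" by (subst sum.swap) (rule refl)
  also have "\<dots> = (\<Sum>k\<in>UNIV. (norm (column k x))^2)"
  proof -
    have c: "(column k x)$i = x$i$k" for i k by (simp add: column_def)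
    show ?thesis by (simp only: power2_norm_eq_inner inner_cvec c Re_sum)
  qed
  finally show ?thesis .
qed

lemma xb_rows:
  fixes b x :: "complex^'n^'n"
  assumes h: "hermitian b"
  shows "inner (x ** b) x = (\<Sum>i\<in>UNIV. inner (\<chi> k. cnj (x$i$k)) (b *v (\<chi> k. cnj (x$i$k))))"
proof -
  have "(\<Sum>k\<in>UNIV. cnj ((x ** b)$i$k) * x$i$k) = (\<Sum>k\<in>UNIV. cnj ((\<chi> k. cnj (x$i$k)) $ k) * (b *v (\<chi> k. cnj (x$i$k)))$k)" for i
  proof -
    have "(\<Sum>k\<in>UNIV. cnj ((x ** b)$i$k) * x$i$k) = (\<Sum>k\<in>UNIV. \<Sum>j\<in>UNIV. cnj (x$i$j) * b$k$j * x$i$k)"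
      by (simp add: matrix_matrix_mult_def sum_distrib_right sum_distrib_left herm_entry[OF h] mult_ac)
    also have "\<dots> = (\<Sum>k\<in>UNIV. cnj ((\<chi> k. cnj (x$i$k)) $ k) * (b *v (\<chi> k. cnj (x$i$k)))$k)"
      unfolding matrix_vector_mult_def
      by (simp, intro sum.cong refl) (simp add: sum_distrib_left mult_ac)
    finally show ?thesis .
  qed
  then show ?thesis by (simp add: inner_cmat inner_cvec Re_sum)
qed

lemma norm_rows:
  fixes x :: "complex^'n^'n"
  shows "norm (\<chi> k. cnj (x$i$k)) = norm (x$i)"
  by (simp add: norm_vec_def)

lemma norm_rows_sum:
  fixes x :: "complex^'n^'n"
  shows "(norm x)^2 = (\<Sum>i\<in>UNIV. (norm (x$i))^2)"
  by (simp add: norm_vec_def L2_set_def sum_nonneg)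

theorem lemma4p9:
  fixes a b x :: "complex^'n^'n"
  assumes "hermitian b" and "pos_def b"
    and "b ** x + x ** b = a"
  shows "frob_norm x \<le> sqrt (real CARD('n) / 2) * frob_norm (matrix_inv b) * frob_norm a"
proof -
  note h = assms(1) and p = assms(2)
  define F where "F = norm (matrix_inv b)"
  have F0: "0 \<le> F" by (simp add: F_def)
  have "(norm x)^2 = (\<Sum>k\<in>UNIV. (norm (column k x))^2)" by (rule norm_cols)
  also have "\<dots> \<le> (\<Sum>k\<in>UNIV. F * inner (column k x) (b *v column k x))"
    by (rule sum_mono) (simp add: F_def key_ineq[OF h p])
  also have "\<dots> = F * inner (b ** x) x"
  proof -
    have "inner (column k x) (b *v column k x) = inner (b *v column k x) (column k x)" for k
      by (metis herm_sym[OF h] inner_commute)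
    then show ?thesis by (simp add: bx_cols sum_distrib_left)
  qed
  finally have 1: "(norm x)^2 \<le> F * inner (b ** x) x" .
  have "(norm x)^2 = (\<Sum>i\<in>UNIV. (norm (\<chi> k. cnj (x$i$k)))^2)" by (simp add: norm_rows norm_rows_sum)
  also have "\<dots> \<le> (\<Sum>i\<in>UNIV. F * inner (\<chi> k. cnj (x$i$k)) (b *v (\<chi> k. cnj (x$i$k))))"
    by (rule sum_mono) (simp add: F_def key_ineq[OF h p])
  also have "\<dots> = F * inner (x ** b) x"
    by (simp add: xb_rows[OF h] sum_distrib_left)
  finally have 2: "(norm x)^2 \<le> F * inner (x ** b) x" .
  have "F * inner a x = F * inner (b**x) x + F * inner (x**b) x"
    using assms(3) by (metis inner_add_left distrib_left)
  then have "2 * (norm x)^2 \<le> F * inner a x" using 1 2 by linarith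
  also have "\<dots> \<le> F * (norm a * norm x)" using F0 by (intro mult_left_mono norm_cauchy_schwarz)
  finally have 4: "(2 * norm x) * norm x \<le> (F * norm a) * norm x"
    by (simp add: power2_eq_square mult_ac)
  have 3: "2 * norm x \<le> F * norm a"
  proof (cases "x = 0")
    case True then show ?thesis using F0 by simp
  next
    case False then have "norm x > 0" by simp
    then show ?thesis using 4 by (simp add: mult_le_cancel_right_pos)
  qed
  have "1/2 \<le> sqrt (real CARD('n) / 2)"
  proof -
    have "(1::real)/4 \<le> real CARD('n) / 2" 
    proof -
      have c: "0 < CARD('n)" by (simp add: finite_UNIV_card_ge_0)
      then have "(1::real) \<le> real CARD('n)" by linarith
      then show ?thesis by linarith
    qed
    then have "sqrt (1/4) \<le> sqrt (real CARD('n) / 2)" by (rule real_sqrt_le_mono)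
    moreover have "sqrt (1/4::real) = 1/2" by (simp add: real_sqrt_divide)
    ultimately show ?thesis by simp
  qed
  then have "(1/2) * (F * norm a) \<le> sqrt (real CARD('n) / 2) * (F * norm a)"
    by (rule mult_right_mono) (simp add: F0)
  then have "norm x \<le> sqrt (real CARD('n) / 2) * F * norm a"
    using 3 by (simp add: mult.assoc)
  then show ?thesis by (simp add: frob_eq F_def)
qed

end
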